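(* Let $k\ge2$ and let $G,H$ be connected graphs. Let $w\in V(G)$ and $w'\in V(H)$ be vertices such that $G-\{w\}$ is connected and $H-\{w'\}$ is disconnected. Then $\chi^k_G(w)\ne\chi^k_H(w')$.
   Context: Graphs are finite, simple, undirected (possibly colored; uncolored graphs are monochromatic). For $k\ge2$, the $k$-dimensional Weisfeiler–Leman algorithm computes a coloring of $V(G)^k$: the initial color of a tuple consists of its input color and the isomorphism type of the ordered induced subgraph on its entries; in each round the new color of $\bar v$ is the pair of its old color and the multiset, over $w\in V(G)$, of the $k$-tuples whose $i$-th component is the old color of $\bar v$ with its $i$-th entry replaced by $w$; the stable coloring is $\chi^k_G$, with canonical colors comparable across graphs. For a vertex $w$, $\chi^k_G(w):=\chi^k_G(w,\dots,w)$. *)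

theory Defs
  imports Main "HOL-Library.Multiset"
begin

definition simple_graph :: "'a set \<Rightarrow> ('a \<Rightarrow> 'a \<Rightarrow> bool) \<Rightarrow> bool" where
  "simple_graph V E \<longleftrightarrow> finite V \<and> (\<forall>x y. E x y \<longrightarrow> x \<in> V \<and> y \<in> V)
     \<and> (\<forall>x y. E x y \<longrightarrow> E y x) \<and> (\<forall>x. \<not> E x x)"

definition connected_on :: "'a set \<Rightarrow> ('a \<Rightarrow> 'a \<Rightarrow> bool) \<Rightarrow> bool" where
  "connected_on S E \<longleftrightarrow> S \<noteq> {} \<and>
     (\<forall>x\<in>S. \<forall>y\<in>S. (\<lambda>u v. E u v \<and> u \<in> S \<and> v \<in> S)\<^sup>*\<^sup>* x y)"

text \<open>Canonical Weisfeiler--Leman colours (comparable across graphs).\<close>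
datatype 'c wlcol =
    WLInit "'c list" "(bool \<times> bool) list list"
  | WLRefine "'c wlcol" "'c wlcol list multiset"

fun wl :: "'a set \<Rightarrow> ('a \<Rightarrow> 'a \<Rightarrow> bool) \<Rightarrow> ('a \<Rightarrow> 'c) \<Rightarrow> nat \<Rightarrow> 'a list \<Rightarrow> 'c wlcol" where
  "wl V E col 0 vs = WLInit (map col vs) (map (\<lambda>x. map (\<lambda>y. (x = y, E x y)) vs) vs)"
| "wl V E col (Suc t) vs = WLRefine (wl V E col t vs)
     (image_mset (\<lambda>w. map (\<lambda>i. wl V E col t (vs[i := w])) [0..<length vs]) (mset_set V))"

text \<open>Equality of stable k-WL colours of vertices w (in G) and w' (in H):
  the canonical colours agree in every round (equivalently, the stable colours
  agree, e.g. computed on the disjoint union).\<close>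
definition same_wl_vertex_color ::
  "nat \<Rightarrow> 'a set \<Rightarrow> ('a \<Rightarrow> 'a \<Rightarrow> bool) \<Rightarrow> ('a \<Rightarrow> 'c) \<Rightarrow> 'a
       \<Rightarrow> 'b set \<Rightarrow> ('b \<Rightarrow> 'b \<Rightarrow> bool) \<Rightarrow> ('b \<Rightarrow> 'c) \<Rightarrow> 'b \<Rightarrow> bool" where
  "same_wl_vertex_color k V E c w V' E' c' w' \<longleftrightarrow>
     (\<forall>t. wl V E c t (replicate k w) = wl V' E' c' t (replicate k w'))"

end

theory Submission
  imports Defs
begin

fun walks :: "'a set \<Rightarrow> ('a \<Rightarrow> 'a \<Rightarrow> bool) \<Rightarrow> nat \<Rightarrow> 'a \<Rightarrow> 'a \<Rightarrow> nat" where
  "walks V E 0 a b = (if a = b then 1 else 0)"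
| "walks V E (Suc l) a b = (\<Sum>z\<in>V. if E a z then walks V E l z b else 0)"

fun fp :: "'a set \<Rightarrow> ('a \<Rightarrow> 'a \<Rightarrow> bool) \<Rightarrow> 'a \<Rightarrow> nat \<Rightarrow> 'a \<Rightarrow> nat" where
  "fp V E w 0 a = 0"
| "fp V E w (Suc l) a = (if E a w \<and> l = 0 then 1 else 0)
     + (\<Sum>z\<in>V-{w}. if E a z then fp V E w l z else 0)"

lemma walks_avoid_zero0: "w \<notin> S \<Longrightarrow> a \<noteq> w \<Longrightarrow> walks S E l a w = 0"
proof (induction l arbitrary: a)
  case 0 then show ?case by simp
next
  case (Suc l)
  have "\<forall>z\<in>S. (if E a z then walks S E l z w else 0) = 0"
  proof
    fix z assume "z \<in> S"
    then have "z \<noteq> w" using Suc.prems(1) by auto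
    then show "(if E a z then walks S E l z w else 0) = 0" using Suc.IH Suc.prems(1) by simp
  qed
  then show ?case by simp
qed

lemma walks_avoid_zero: "a \<noteq> w \<Longrightarrow> walks (V-{w}) E l a w = 0"
  by (rule walks_avoid_zero0) auto

lemma decomp:
  assumes fin: "finite V" and wV: "w \<in> V"
  shows "a \<noteq> w \<Longrightarrow> walks V E l a b = walks (V-{w}) E l a b
            + (\<Sum>j\<le>l. fp V E w j a * walks V E (l-j) w b)"
proof (induction l arbitrary: a)
  case 0
  then show ?case by simp
next
  case (Suc l)
  let ?W = "\<lambda>j. walks V E (l-j) w b"
  have split: "walks V E (Suc l) a b = (if E a w then walks V E l w b else 0)
      + (\<Sum>z\<in>V-{w}. if E a z then walks V E l z b else 0)"
    using fin wV by (simp add: sum.remove)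
  have "(\<Sum>z\<in>V-{w}. if E a z then walks V E l z b else 0)
      = (\<Sum>z\<in>V-{w}. (if E a z then walks (V-{w}) E l z b else 0)
           + (\<Sum>j\<le>l. (if E a z then fp V E w j z else 0) * ?W j))"
    using Suc.IH by (intro sum.cong) auto
  also have "\<dots> = walks (V-{w}) E (Suc l) a b
       + (\<Sum>j\<le>l. (\<Sum>z\<in>V-{w}. if E a z then fp V E w j z else 0) * ?W j)"
    by (simp add: sum.distrib sum_distrib_right sum.swap[of _ "V-{w}"])
  finally have A: "(\<Sum>z\<in>V-{w}. if E a z then walks V E l z b else 0) = \<dots>" .
  have "(\<Sum>j\<le>Suc l. fp V E w j a * walks V E (Suc l-j) w b)
      = (\<Sum>j\<le>l. fp V E w (Suc j) a * ?W j)"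
    by (subst sum.atMost_Suc_shift) simp
  also have "\<dots> = (\<Sum>j\<le>l. (if E a w \<and> j = 0 then ?W j else 0))
      + (\<Sum>j\<le>l. (\<Sum>z\<in>V-{w}. if E a z then fp V E w j z else 0) * ?W j)"
    by (auto simp: sum.distrib[symmetric] distrib_right intro!: sum.cong)
  also have "(\<Sum>j\<le>l. (if E a w \<and> j = 0 then ?W j else 0)) = (if E a w then walks V E l w b else 0)"
    by (simp add: sum.delta)
  finally have B: "(\<Sum>j\<le>Suc l. fp V E w j a * walks V E (Suc l-j) w b)
      = (if E a w then walks V E l w b else 0)
      + (\<Sum>j\<le>l. (\<Sum>z\<in>V-{w}. if E a z then fp V E w j z else 0) * ?W j)" .
  show ?case unfolding split A B by simp
qed

lemma fp_transfer:
  assumes "finite V" "w \<in> V" "finite V'" "w' \<in> V'" "a \<noteq> w" "a' \<noteq> w'"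
   and W1: "\<And>l. walks V E l a w = walks V' E' l a' w'"
   and W2: "\<And>l. walks V E l w w = walks V' E' l w' w'"
  shows "fp V E w l a = fp V' E' w' l a'"
proof (induction l rule: less_induct)
  case (less l)
  show ?case
  proof (cases l)
    case 0 then show ?thesis by simp
  next
    case (Suc m)
    have d: "walks V E l a w = (\<Sum>j\<le>m. fp V E w j a * walks V E (l-j) w w) + fp V E w l a"
      using decomp[OF assms(1,2) assms(5), of E l w] walks_avoid_zero[OF assms(5), of V E l] Suc by simp
    have d': "walks V' E' l a' w' = (\<Sum>j\<le>m. fp V' E' w' j a' * walks V' E' (l-j) w' w') + fp V' E' w' l a'"
      using decomp[OF assms(3,4) assms(6), of E' l w'] walks_avoid_zero[OF assms(6), of V' E' l] Suc by simp
    have "(\<Sum>j\<le>m. fp V E w j a * walks V E (l-j) w w) = (\<Sum>j\<le>m. fp V' E' w' j a' * walks V' E' (l-j) w' w')"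
      using less.IH Suc W2 by (intro sum.cong) auto
    then show ?thesis using d d' W1[of l] by simp
  qed
qed


lemma wl_le_eq:
  assumes "wl V E c t vs = wl V' E' c' t vs'" "s \<le> t"
  shows "wl V E c s vs = wl V' E' c' s vs'"
  using assms
proof (induction t)
  case 0 then show ?case by simp
next
  case (Suc t) then show ?case by (cases "s = Suc t") (auto simp: le_Suc_eq)
qed

lemma wl0_info:
  assumes eq: "wl V E c 0 vs = wl V' E' c' 0 vs'" and ij: "i < length vs" "j < length vs"
  shows "length vs = length vs'" "(vs!i = vs!j) = (vs'!i = vs'!j)"
    "E (vs!i) (vs!j) = E' (vs'!i) (vs'!j)"
proof -
  from eq have L: "map c vs = map c' vs'"
    and M: "map (\<lambda>x. map (\<lambda>y. (x = y, E x y)) vs) vs = map (\<lambda>x. map (\<lambda>y. (x = y, E' x y)) vs') vs'"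
    by simp_all
  from L show len: "length vs = length vs'" by (metis length_map)
  from M have "map (\<lambda>x. map (\<lambda>y. (x = y, E x y)) vs) vs ! i ! j
      = map (\<lambda>x. map (\<lambda>y. (x = y, E' x y)) vs') vs' ! i ! j" by simp
  with ij len have "(vs!i = vs!j, E (vs!i) (vs!j)) = (vs'!i = vs'!j, E' (vs'!i) (vs'!j))" by simp
  then show "(vs!i = vs!j) = (vs'!i = vs'!j)" "E (vs!i) (vs!j) = E' (vs'!i) (vs'!j)" by simp_all
qed

lemma map_upt_nth_eq:
  assumes "map F [0..<n] = map F' [0..<n']" "i < n"
  shows "F i = F' i"
proof -
  have n: "n = n'" using arg_cong[OF assms(1), of length] by simp
  have "map F [0..<n] ! i = map F' [0..<n'] ! i" using assms(1) by simp
  with assms(2) n show ?thesis by simp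
qed

lemma sum_transfer:
  assumes fA: "finite A" and fB: "finite B"
    and M: "image_mset f (mset_set A) = image_mset f' (mset_set B)"
    and G: "\<And>a b. a \<in> A \<Longrightarrow> b \<in> B \<Longrightarrow> f a = f' b \<Longrightarrow> g a = g' b"
  shows "sum g A = sum g' B"
proof -
  have S: "f ` A = f' ` B"
    using arg_cong[OF M, of set_mset] fA fB by simp
  define T where "T c = g (SOME a. a \<in> A \<and> f a = c)" for c
  have TA: "T (f a) = g a" if "a \<in> A" for a
  proof -
    have "f a \<in> f' ` B" using S that by blast
    then obtain b where b0: "f a = f' b" "b \<in> B" by (rule imageE)
    then have b: "b \<in> B" "f' b = f a" by simp_all
    have ex: "\<exists>a0. a0 \<in> A \<and> f a0 = f a" using that by blast
    define a0 where "a0 = (SOME a0. a0 \<in> A \<and> f a0 = f a)"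
    have a0: "a0 \<in> A \<and> f a0 = f a" unfolding a0_def by (rule someI_ex[OF ex])
    have "g a0 = g' b" using G[of a0 b] b a0 by simp
    moreover have "g a = g' b" using G[of a b] b that by simp
    ultimately show ?thesis unfolding T_def a0_def[symmetric] by simp
  qed
  have TB: "T (f' b) = g' b" if "b \<in> B" for b
  proof -
    have "f' b \<in> f ` A" using S that by blast
    then obtain a1 where "f' b = f a1" "a1 \<in> A" by (rule imageE)
    then have ex: "\<exists>a0. a0 \<in> A \<and> f a0 = f' b" by auto
    define a0 where "a0 = (SOME a0. a0 \<in> A \<and> f a0 = f' b)"
    have a0: "a0 \<in> A \<and> f a0 = f' b" unfolding a0_def by (rule someI_ex[OF ex])
    show ?thesis unfolding T_def a0_def[symmetric] using G[of a0 b] a0 that by simp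
  qed
  have "sum g A = sum (\<lambda>a. T (f a)) A" using TA by simp
  also have "\<dots> = sum_mset (image_mset T (image_mset f (mset_set A)))"
    by (simp add: sum_unfold_sum_mset image_mset.compositionality comp_def)
  also have "\<dots> = sum_mset (image_mset T (image_mset f' (mset_set B)))" using M by simp
  also have "\<dots> = sum (\<lambda>b. T (f' b)) B"
    by (simp add: sum_unfold_sum_mset image_mset.compositionality comp_def)
  also have "\<dots> = sum g' B" using TB by simp
  finally show ?thesis .
qed

lemma walks_transfer:
  assumes fin: "finite V" "finite V'"
  shows "wl V E c l vs = wl V' E' c' l vs' \<Longrightarrow> i < length vs \<Longrightarrow> j < length vs \<Longrightarrow> i \<noteq> j
     \<Longrightarrow> walks V E l (vs!i) (vs!j) = walks V' E' l (vs'!i) (vs'!j)"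
proof (induction l arbitrary: vs vs' i j)
  case 0
  then show ?case using wl0_info[OF 0(1) 0(2) 0(3)] by simp
next
  case (Suc l)
  have len: "length vs = length vs'"
    using wl0_info(1)[OF wl_le_eq[OF Suc.prems(1)] Suc.prems(2,3)] by simp
  from Suc.prems(1) have M:
    "image_mset (\<lambda>w. map (\<lambda>i. wl V E c l (vs[i := w])) [0..<length vs]) (mset_set V)
       = image_mset (\<lambda>w. map (\<lambda>i. wl V' E' c' l (vs'[i := w])) [0..<length vs']) (mset_set V')"
    by simp
  show ?case
    unfolding walks.simps
  proof (rule sum_transfer[OF fin M])
    fix z z'
    assume zz: "map (\<lambda>i. wl V E c l (vs[i := z])) [0..<length vs]
        = map (\<lambda>i. wl V' E' c' l (vs'[i := z'])) [0..<length vs']"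
    have ei: "wl V E c l (vs[i := z]) = wl V' E' c' l (vs'[i := z'])"
      using map_upt_nth_eq[OF zz, of i] Suc.prems by simp
    have ej: "wl V E c l (vs[j := z]) = wl V' E' c' l (vs'[j := z'])"
      using map_upt_nth_eq[OF zz, of j] Suc.prems by simp
    have W: "walks V E l z (vs!j) = walks V' E' l z' (vs'!j)"
      using Suc.IH[OF ei, of i j] Suc.prems len by simp
    have Ed: "E (vs!i) z = E' (vs'!i) z'"
      using wl0_info(3)[OF wl_le_eq[OF ej], of i j] Suc.prems len by simp
    show "(if E (vs ! i) z then walks V E l z (vs ! j) else 0) =
          (if E' (vs' ! i) z' then walks V' E' l z' (vs' ! j) else 0)"
      using W Ed by simp
  qed
qed

lemma extend:
  assumes fin: "finite V" "finite V'" and eq: "\<forall>t. wl V E c t vs = wl V' E' c' t vs'"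
    and z': "z' \<in> V'"
  shows "\<exists>z\<in>V. \<forall>t. \<forall>m<length vs. wl V E c t (vs[m:=z]) = wl V' E' c' t (vs'[m:=z'])"
proof -
  define P where "P t z \<longleftrightarrow> (\<forall>m<length vs. wl V E c t (vs[m:=z]) = wl V' E' c' t (vs'[m:=z']))" for t z
  have len: "length vs = length vs'"
  proof -
    have "wl V E c 0 vs = wl V' E' c' 0 vs'" using eq by blast
    then have "map c vs = map c' vs'" by simp
    then have "length (map c vs) = length (map c' vs')" by (rule arg_cong)
    then show ?thesis by simp
  qed
  have ex: "\<exists>z\<in>V. P t z" for t
  proof -
    from eq[rule_format, of "Suc t"] have M:
      "image_mset (\<lambda>w. map (\<lambda>i. wl V E c t (vs[i := w])) [0..<length vs]) (mset_set V)
       = image_mset (\<lambda>w. map (\<lambda>i. wl V' E' c' t (vs'[i := w])) [0..<length vs']) (mset_set V')"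
      by simp
    have S: "(\<lambda>w. map (\<lambda>i. wl V E c t (vs[i := w])) [0..<length vs]) ` V
       = (\<lambda>w. map (\<lambda>i. wl V' E' c' t (vs'[i := w])) [0..<length vs']) ` V'"
      using arg_cong[OF M, of set_mset] fin by simp
    have "(\<lambda>w. map (\<lambda>i. wl V' E' c' t (vs'[i := w])) [0..<length vs']) z'
        \<in> (\<lambda>w. map (\<lambda>i. wl V E c t (vs[i := w])) [0..<length vs]) ` V"
      unfolding S using z' by (rule imageI)
    then obtain z where fz0: "(\<lambda>w. map (\<lambda>i. wl V' E' c' t (vs'[i := w])) [0..<length vs']) z'
        = (\<lambda>w. map (\<lambda>i. wl V E c t (vs[i := w])) [0..<length vs]) z" and z: "z \<in> V"
      by (rule imageE)
    have fz: "map (\<lambda>i. wl V E c t (vs[i := z])) [0..<length vs]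
        = map (\<lambda>i. wl V' E' c' t (vs'[i := z'])) [0..<length vs']"
      using fz0 by simp
    have "P t z" unfolding P_def using map_upt_nth_eq[OF fz] by simp
    then show ?thesis using z by blast
  qed
  have mono: "P s z" if "P t z" "s \<le> t" for s t z
    using that wl_le_eq[where s=s and t=t] unfolding P_def by blast
  show ?thesis
  proof (rule ccontr)
    assume "\<not> ?thesis"
    then have "\<forall>z\<in>V. \<exists>t. \<not> P t z" unfolding P_def by blast
    from bchoice[OF this] obtain T where T: "\<forall>z\<in>V. \<not> P (T z) z" by blast
    obtain z where z: "z \<in> V" "P (Max (T ` V)) z" using ex by blast
    have "T z \<le> Max (T ` V)" using fin z by simp
    then have "P (T z) z" using mono z by blast
    then show False using T z by blast
  qed
qed


lemma walks_reach:
  assumes "walks S E l a b > 0" "a \<in> S"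
  shows "(\<lambda>u v. E u v \<and> u \<in> S \<and> v \<in> S)\<^sup>*\<^sup>* a b"
  using assms
proof (induction l arbitrary: a)
  case 0 then show ?case by (simp split: if_splits)
next
  case (Suc l)
  have "\<exists>z\<in>S. 0 < (if E a z then walks S E l z b else 0)"
  proof (rule ccontr)
    assume "\<not> ?thesis"
    then have "\<forall>z\<in>S. (if E a z then walks S E l z b else 0) = 0" by auto
    then have "walks S E (Suc l) a b = 0" by simp
    then show False using Suc.prems(1) by simp
  qed
  then obtain z where z: "z \<in> S" "0 < (if E a z then walks S E l z b else 0)" by blast
  then have Ea: "E a z" and wz: "walks S E l z b > 0" by (simp_all split: if_splits)
  have "(\<lambda>u v. E u v \<and> u \<in> S \<and> v \<in> S)\<^sup>*\<^sup>* z b" using Suc.IH[OF wz z(1)] .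
  with Ea show ?case using z(1) Suc.prems(2)
    by (auto intro: converse_rtranclp_into_rtranclp)
qed

lemma reach_walks:
  assumes "finite S" "(\<lambda>u v. E u v \<and> u \<in> S \<and> v \<in> S)\<^sup>*\<^sup>* a b"
  shows "\<exists>l. walks S E l a b > 0"
  using assms(2)
proof (induction rule: converse_rtranclp_induct)
  case base
  then show ?case by (rule exI[of _ 0]) simp
next
  case (step y z)
  then obtain l where l: "walks S E l z b > 0" by blast
  have "(if E y z then walks S E l z b else 0) \<le> walks S E (Suc l) y b"
    unfolding walks.simps by (rule member_le_sum) (use step(1) assms(1) in auto)
  then show ?case using l step(1) by (intro exI[of _ "Suc l"]) simp
qed

theorem corollary7:
  fixes k :: nat
    and V :: "'a set" and E :: "'a \<Rightarrow> 'a \<Rightarrow> bool" and col :: "'a \<Rightarrow> 'c" and w :: 'a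
    and V' :: "'b set" and E' :: "'b \<Rightarrow> 'b \<Rightarrow> bool" and col' :: "'b \<Rightarrow> 'c" and w' :: 'b
  assumes "k \<ge> 2"
    and "simple_graph V E" and "simple_graph V' E'"
    and "connected_on V E" and "connected_on V' E'"
    and "w \<in> V" and "w' \<in> V'"
    and "connected_on (V - {w}) E"
    and "\<not> connected_on (V' - {w'}) E'"
  shows "\<not> same_wl_vertex_color k V E col w V' E' col' w'"
proof
  assume same: "same_wl_vertex_color k V E col w V' E' col' w'"
  have finV: "finite V" and finV': "finite V'"
    using assms(2,3) by (simp_all add: simple_graph_def)
  have eq0: "\<forall>t. wl V' E' col' t (replicate k w') = wl V E col t (replicate k w)"
    using same by (simp add: same_wl_vertex_color_def)
  show False
  proof (cases "V' - {w'} = {}")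
    case True
    then have V': "V' = {w'}" using assms(7) by auto
    obtain u where u: "u \<in> V - {w}" using assms(8) by (auto simp: connected_on_def)
    have "card {w, u} \<le> card V" using u assms(6) finV by (intro card_mono) auto
    moreover have "card {w, u} = 2" using u by auto
    ultimately have cV: "card V \<ge> 2" by simp
    from eq0[rule_format, of "Suc 0"] have
      "image_mset (\<lambda>x. map (\<lambda>i. wl V' E' col' 0 ((replicate k w')[i := x])) [0..<length (replicate k w')]) (mset_set V')
     = image_mset (\<lambda>x. map (\<lambda>i. wl V E col 0 ((replicate k w)[i := x])) [0..<length (replicate k w)]) (mset_set V)"
      by simp
    then have "size (mset_set V') = size (mset_set V)" by (metis size_image_mset)
    then have "card V' = card V" by simp
    then show False using V' cV by simp
  next
    case False
    then obtain p q where p: "p \<in> V'-{w'}" and q: "q \<in> V'-{w'}"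
      and nreach: "\<not> (\<lambda>u v. E' u v \<and> u \<in> V'-{w'} \<and> v \<in> V'-{w'})\<^sup>*\<^sup>* p q"
      using assms(9) unfolding connected_on_def by blast
    define r where "r = replicate k w"
    define r' where "r' = replicate k w'"
    have k1: "1 < k" "0 < k" using assms(1) by simp_all
    have eq0': "\<forall>t. wl V E col t r = wl V' E' col' t r'"
      using eq0 unfolding r_def r'_def by simp
    obtain x where x: "x \<in> V" and ex1: "\<forall>t. \<forall>m<length r.
        wl V E col t (r[m:=x]) = wl V' E' col' t (r'[m:=q])"
      using extend[OF finV finV' eq0', of q] q by auto
    define s where "s = r[1:=x]"
    define s' where "s' = r'[1:=q]"
    have eq1: "\<forall>t. wl V' E' col' t s' = wl V E col t s"
      using ex1 k1 unfolding s_def s'_def r_def by simp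
    have eq1': "\<forall>t. wl V E col t s = wl V' E' col' t s'" using eq1 by simp
    obtain y where y: "y \<in> V" and ex2: "\<forall>t. \<forall>m<length s.
        wl V E col t (s[m:=y]) = wl V' E' col' t (s'[m:=p])"
      using extend[OF finV finV' eq1', of p] p by auto
    have eq2: "\<forall>t. wl V' E' col' t (s'[0:=p]) = wl V E col t (s[0:=y])"
      using ex2 k1 unfolding s_def r_def by simp
    have eq3: "\<forall>t. wl V' E' col' t (r'[1:=p]) = wl V E col t (r[1:=y])"
    proof
      fix t
      have h: "\<forall>m<length s. wl V E col t (s[m:=y]) = wl V' E' col' t (s'[m:=p])"
        using ex2 by blast
      have "1 < length s" using k1 unfolding s_def r_def by simp
      then have "wl V E col t (s[1:=y]) = wl V' E' col' t (s'[1:=p])"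
        using h by blast
      then show "wl V' E' col' t (r'[1:=p]) = wl V E col t (r[1:=y])"
        unfolding s_def s'_def by simp
    qed
    have ls: "length s' = k" "length r' = k" "length (s'[0:=p]) = k" "length (r'[1:=p]) = k"
      unfolding s'_def r'_def by simp_all
    have xw: "x \<noteq> w"
      using wl0_info(2)[OF wl_le_eq[OF eq1[rule_format, of 0]], of 0 1] ls k1 q
      unfolding s_def s'_def r_def r'_def by auto
    have yw: "y \<noteq> w"
      using wl0_info(2)[OF wl_le_eq[OF eq3[rule_format, of 0]], of 0 1] ls k1 p
      unfolding r_def r'_def by auto
    have Wqq: "walks V' E' l w' w' = walks V E l w w" for l
      using walks_transfer[OF finV' finV eq0[rule_format, of l], of 0 1] k1 by simp
    have Wpq: "walks V' E' l p q = walks V E l y x" for l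
      using walks_transfer[OF finV' finV eq2[rule_format, of l], of 0 1] k1 ls
      unfolding s_def s'_def r_def r'_def by simp
    have Wpw: "walks V' E' l p w' = walks V E l y w" for l
      using walks_transfer[OF finV' finV eq3[rule_format, of l], of 1 0] k1 ls
      unfolding r_def r'_def by simp
    have Wwq: "walks V' E' l w' q = walks V E l w x" for l
      using walks_transfer[OF finV' finV eq1[rule_format, of l], of 0 1] k1 ls
      unfolding s_def s'_def r_def r'_def by simp
    have Fp: "fp V' E' w' l p = fp V E w l y" for l
      using fp_transfer[OF finV' assms(7) finV assms(6), of p y E' E l] p yw Wpw Wqq by auto
    have N: "walks (V'-{w'}) E' l p q = walks (V-{w}) E l y x" for l
    proof -
      have d: "walks V E l y x = walks (V-{w}) E l y x
            + (\<Sum>j\<le>l. fp V E w j y * walks V E (l-j) w x)"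
        using decomp[OF finV assms(6) yw] .
      have d': "walks V' E' l p q = walks (V'-{w'}) E' l p q
            + (\<Sum>j\<le>l. fp V' E' w' j p * walks V' E' (l-j) w' q)"
        using decomp[OF finV' assms(7)] p by simp
      have "(\<Sum>j\<le>l. fp V' E' w' j p * walks V' E' (l-j) w' q)
          = (\<Sum>j\<le>l. fp V E w j y * walks V E (l-j) w x)"
        using Fp Wwq by simp
      then show ?thesis using d d' Wpq[of l] by simp
    qed
    have R: "(\<lambda>u v. E u v \<and> u \<in> V-{w} \<and> v \<in> V-{w})\<^sup>*\<^sup>* y x"
      using assms(8) x y xw yw unfolding connected_on_def by blast
    have fVw: "finite (V-{w})" using finV by simp
    from reach_walks[OF fVw R] obtain l where "walks (V-{w}) E l y x > 0" by (elim exE)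
    then have "walks (V'-{w'}) E' l p q > 0" using N by simp
    from walks_reach[OF this p] nreach show False by (rule notE[rotated])
  qed
qed

end
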